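(* Let $X$ be a separable completely metrizable space and $T:X\to X$ continuous. The following are equivalent: (i) $T$ is quasi-rigid; (ii) $T$ is topologically quasi-rigid; (iii) $T_{(N)}$ is topologically recurrent for every $N\in\mathbb{N}$; (iv) $T_{(N)}$ is recurrent for every $N\in\mathbb{N}$.
   Context: For $N\in\mathbb{N}$, $T_{(N)}:X^N\to X^N$, $T_{(N)}(x_1,\dots,x_N)=(Tx_1,\dots,Tx_N)$. A point $x$ is recurrent for a map $S$ if $x\in\overline{\{S^nx:n\geq1\}}$; $S$ is recurrent if its set of recurrent points is dense. $S$ is topologically recurrent if for every non-empty open $U$ there is $n\in\mathbb{N}$ with $S^n(U)\cap U\neq\varnothing$. $T$ is quasi-rigid if there exist a strictly increasing sequence $(n_k)$ of positive integers and a dense $Y\subset X$ with $T^{n_k}x\to x$ for all $x\in Y$. $T$ is topologically quasi-rigid if there exists a strictly increasing sequence $(n_k)$ such that for every non-empty open $U$ there is $k_U$ with $T^{n_k}(U)\cap U\neq\varnothing$ for all $k\geq k_U$. *)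

theory Defs
  imports "HOL-Analysis.Analysis"
begin

definition recurrent_point :: "'a topology \<Rightarrow> ('a \<Rightarrow> 'a) \<Rightarrow> 'a \<Rightarrow> bool" where
  "recurrent_point X S x \<longleftrightarrow> x \<in> X closure_of {(S ^^ n) x | n. n \<ge> 1}"

definition recurrent_map :: "'a topology \<Rightarrow> ('a \<Rightarrow> 'a) \<Rightarrow> bool" where
  "recurrent_map X S \<longleftrightarrow>
     X closure_of {x \<in> topspace X. recurrent_point X S x} = topspace X"

definition topologically_recurrent :: "'a topology \<Rightarrow> ('a \<Rightarrow> 'a) \<Rightarrow> bool" where
  "topologically_recurrent X S \<longleftrightarrow>
     (\<forall>U. openin X U \<and> U \<noteq> {} \<longrightarrow> (\<exists>n::nat. n \<ge> 1 \<and> (S ^^ n) ` U \<inter> U \<noteq> {}))"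

definition quasi_rigid :: "'a topology \<Rightarrow> ('a \<Rightarrow> 'a) \<Rightarrow> bool" where
  "quasi_rigid X T \<longleftrightarrow>
     (\<exists>(nk :: nat \<Rightarrow> nat) Y. strict_mono nk \<and> (\<forall>k. 0 < nk k) \<and>
        Y \<subseteq> topspace X \<and> X closure_of Y = topspace X \<and>
        (\<forall>x\<in>Y. limitin X (\<lambda>k. (T ^^ nk k) x) x sequentially))"

definition topologically_quasi_rigid :: "'a topology \<Rightarrow> ('a \<Rightarrow> 'a) \<Rightarrow> bool" where
  "topologically_quasi_rigid X T \<longleftrightarrow>
     (\<exists>nk :: nat \<Rightarrow> nat. strict_mono nk \<and> (\<forall>k. 0 < nk k) \<and>
        (\<forall>U. openin X U \<and> U \<noteq> {} \<longrightarrow>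
           (\<exists>kU. \<forall>k\<ge>kU. (T ^^ nk k) ` U \<inter> U \<noteq> {})))"

text \<open>X^N as the product topology on functions indexed by {..<N} (extensional),
  and the diagonal map T_(N).\<close>

definition power_top :: "'a topology \<Rightarrow> nat \<Rightarrow> (nat \<Rightarrow> 'a) topology" where
  "power_top X N = product_topology (\<lambda>_. X) {..<N}"

definition power_map :: "('a \<Rightarrow> 'a) \<Rightarrow> nat \<Rightarrow> (nat \<Rightarrow> 'a) \<Rightarrow> (nat \<Rightarrow> 'a)" where
  "power_map T N x = restrict (\<lambda>i. T (x i)) {..<N}"

end

theory Submission imports Defs begin

lemma iter_cont: "continuous_map X X T \<Longrightarrow> continuous_map X X (T ^^ n)"
proof (induction n)
  case 0
  have "T ^^ 0 = id" by (rule funpow.simps(1))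
  then show ?case by (simp only: continuous_map_id)
next
  case (Suc n)
  then have "continuous_map X X (T ^^ n)" by blast
  then have "continuous_map X X (T \<circ> (T ^^ n))" using continuous_map_compose Suc.prems by blast
  moreover have "T ^^ Suc n = T \<circ> (T ^^ n)" by (rule funpow.simps(2))
  ultimately show ?case by (simp only:)
qed

lemma iter_top: "continuous_map X X T \<Longrightarrow> x \<in> topspace X \<Longrightarrow> (T ^^ n) x \<in> topspace X"
  using continuous_map_image_subset_topspace[OF iter_cont[of X T n]] by blast

lemma power_map_iter: "n \<ge> 1 \<Longrightarrow> (power_map T N ^^ n) x = restrict (\<lambda>i. (T ^^ n) (x i)) {..<N}"
proof (induction n)
  case 0 then show ?case by simp
next
  case (Suc n)
  show ?case
  proof (cases "n = 0")
    case True then show ?thesis by (simp add: power_map_def)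
  next
    case False
    then have "(power_map T N ^^ n) x = restrict (\<lambda>i. (T ^^ n) (x i)) {..<N}" using Suc by (simp add: restrict_def)
    then have e: "(power_map T N ^^ n) x = restrict (\<lambda>i. (T ^^ n) (x i)) {..<N}" .
    have "(power_map T N ^^ Suc n) x = power_map T N ((power_map T N ^^ n) x)" by simp
    also have "\<dots> = restrict (\<lambda>i. (T ^^ Suc n) (x i)) {..<N}" unfolding e
      by (simp add: power_map_def fun_eq_iff)
    finally show ?thesis .
  qed
qed

lemma topspace_power_top: "topspace (power_top X N) = PiE {..<N} (\<lambda>_. topspace X)"
  by (simp add: power_top_def)

lemma dense_meet: "X closure_of S = topspace X \<Longrightarrow> openin X U \<Longrightarrow> U \<noteq> {} \<Longrightarrow> \<exists>y\<in>S. y \<in> U"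
  using dense_intersects_open by blast

lemma i_ii: assumes "quasi_rigid X T" shows "topologically_quasi_rigid X T"
proof -
  obtain nk :: "nat \<Rightarrow> nat" and Y where nk: "strict_mono nk" "\<forall>k. 0 < nk k" and Y: "Y \<subseteq> topspace X" "X closure_of Y = topspace X"
    and lim: "\<forall>x\<in>Y. limitin X (\<lambda>k. (T ^^ nk k) x) x sequentially"
    using assms unfolding quasi_rigid_def by blast
  show ?thesis unfolding topologically_quasi_rigid_def
  proof (intro exI[of _ nk] conjI allI impI)
    fix U assume U: "openin X U \<and> U \<noteq> {}"
    then obtain y where y: "y \<in> Y" "y \<in> U" using dense_meet Y by metis
    then have "eventually (\<lambda>k. (T ^^ nk k) y \<in> U) sequentially"
      using lim U unfolding limitin_def by blast
    then obtain kU where "\<forall>k\<ge>kU. (T ^^ nk k) y \<in> U" by (auto simp: eventually_sequentially)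
    then show "\<exists>kU. \<forall>k\<ge>kU. (T ^^ nk k) ` U \<inter> U \<noteq> {}" using y by blast
  qed (use nk in auto)
qed

lemma ii_iii: assumes "topologically_quasi_rigid X T" "N \<ge> 1"
  shows "topologically_recurrent (power_top X N) (power_map T N)"
proof -
  obtain nk :: "nat \<Rightarrow> nat" where nk0: "strict_mono nk \<and> (\<forall>k. 0 < nk k) \<and>
        (\<forall>U. openin X U \<and> U \<noteq> {} \<longrightarrow> (\<exists>kU. \<forall>k\<ge>kU. (T ^^ nk k) ` U \<inter> U \<noteq> {}))"
    using assms(1) unfolding topologically_quasi_rigid_def by (elim exE) (rule that)
  then have nk: "strict_mono nk" "\<forall>k. 0 < nk k" by simp_all
  have tq: "\<And>U. openin X U \<Longrightarrow> U \<noteq> {} \<Longrightarrow> \<exists>kU. \<forall>k\<ge>kU. (T ^^ nk k) ` U \<inter> U \<noteq> {}"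
    using nk0 by simp
  show ?thesis unfolding topologically_recurrent_def
  proof (intro allI impI)
    fix W assume W: "openin (power_top X N) W \<and> W \<noteq> {}"
    then obtain w where w: "w \<in> W" by blast
    then obtain U where U: "\<forall>i\<in>{..<N}. openin X (U i)" "w \<in> PiE {..<N} U" "PiE {..<N} U \<subseteq> W"
      using W unfolding power_top_def openin_product_topology_alt by blast
    have "\<forall>i<N. \<exists>kU. \<forall>k\<ge>kU. (T ^^ nk k) ` U i \<inter> U i \<noteq> {}"
    proof (intro allI impI)
      fix i assume "i < N"
      then have "openin X (U i)" "U i \<noteq> {}" using U by (auto simp: PiE_iff)
      then show "\<exists>kU. \<forall>k\<ge>kU. (T ^^ nk k) ` U i \<inter> U i \<noteq> {}" using tq by blast
    qed
    then obtain kf where kf: "\<And>i k. i < N \<Longrightarrow> k \<ge> kf i \<Longrightarrow> (T ^^ nk k) ` U i \<inter> U i \<noteq> {}"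
      by metis
    define k0 where "k0 = (\<Sum>i<N. kf i)"
    have "kf i \<le> k0" if "i < N" for i
      unfolding k0_def using that by (intro member_le_sum) auto
    then have "\<forall>i<N. \<exists>x. x \<in> U i \<and> (T ^^ nk k0) x \<in> U i" using kf by blast
    then obtain xf where xf: "\<And>i. i < N \<Longrightarrow> xf i \<in> U i \<and> (T ^^ nk k0) (xf i) \<in> U i" by metis
    define x where "x = restrict xf {..<N}"
    have "x \<in> PiE {..<N} U" using xf by (simp add: x_def PiE_iff)
    then have "x \<in> W" using U(3) by blast
    have e1: "(power_map T N ^^ nk k0) x = restrict (\<lambda>i. (T ^^ nk k0) (xf i)) {..<N}"
      using nk(2) by (simp add: x_def power_map_iter Suc_le_eq restrict_def fun_eq_iff)
    have e2: "restrict (\<lambda>i. (T ^^ nk k0) (xf i)) {..<N} \<in> PiE {..<N} U"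
      using xf by (simp add: PiE_iff)
    have "(power_map T N ^^ nk k0) x \<in> W" unfolding e1 by (rule subsetD[OF U(3) e2])
    moreover note \<open>x \<in> W\<close>
    ultimately show "\<exists>n\<ge>1. (power_map T N ^^ n) ` W \<inter> W \<noteq> {}"
      using nk(2) by (metis Suc_le_eq One_nat_def image_eqI disjoint_iff)
  qed
qed

lemma iv_iii: assumes "recurrent_map X S" shows "topologically_recurrent X S"
  unfolding topologically_recurrent_def
proof (intro allI impI)
  fix U assume U: "openin X U \<and> U \<noteq> {}"
  then obtain x where x: "x \<in> U" "recurrent_point X S x"
    using dense_meet assms unfolding recurrent_map_def by (metis (no_types, lifting) mem_Collect_eq)
  then have "x \<in> X closure_of {(S ^^ n) x | n. n \<ge> 1}" by (simp add: recurrent_point_def)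
  then obtain n where "n \<ge> 1" "(S ^^ n) x \<in> U" using U x unfolding in_closure_of by blast
  then show "\<exists>n\<ge>1. (S ^^ n) ` U \<inter> U \<noteq> {}" using x by blast
qed

lemma i_iv: assumes "quasi_rigid X T" "N \<ge> 1" "continuous_map X X T"
  shows "recurrent_map (power_top X N) (power_map T N)"
proof -
  obtain nk :: "nat \<Rightarrow> nat" and Y where nk: "strict_mono nk" "\<forall>k. 0 < nk k" and Y: "Y \<subseteq> topspace X" "X closure_of Y = topspace X"
    and lim: "\<forall>x\<in>Y. limitin X (\<lambda>k. (T ^^ nk k) x) x sequentially"
    using assms unfolding quasi_rigid_def by blast
  define Z where "Z = PiE {..<N} (\<lambda>_. Y)"
  have cZ: "power_top X N closure_of Z = topspace (power_top X N)"
    using Y by (simp add: Z_def power_top_def closure_of_product_topology)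
  have rec: "recurrent_point (power_top X N) (power_map T N) z" if z: "z \<in> Z" for z
  proof -
    have zt: "z \<in> topspace (power_top X N)" unfolding topspace_power_top using z Y PiE_mono[of "{..<N}" "\<lambda>_. Y" "\<lambda>_. topspace X"] by (simp add: Z_def subset_iff)
    have "limitin (power_top X N) (\<lambda>k. (power_map T N ^^ nk k) z) z sequentially"
      unfolding power_top_def limitin_componentwise
    proof (intro conjI ballI)
      show "z \<in> extensional {..<N}" using z by (auto simp: Z_def PiE_iff)
      have "(power_map T N ^^ nk k) z \<in> topspace (product_topology (\<lambda>_. X) {..<N})" for k
      proof -
        have "\<And>i. i < N \<Longrightarrow> z i \<in> topspace X" using zt by (auto simp: topspace_power_top)
        then show ?thesis using nk(2) assms(3) by (simp add: power_map_iter Suc_le_eq PiE_iff iter_top)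
      qed
      then show "\<forall>\<^sub>F k in sequentially. (power_map T N ^^ nk k) z \<in> topspace (product_topology (\<lambda>_. X) {..<N})"
        by (simp add: always_eventually)
      fix i assume i: "i \<in> {..<N}"
      then have "z i \<in> Y" using z by (auto simp: Z_def)
      then have "limitin X (\<lambda>k. (T ^^ nk k) (z i)) (z i) sequentially" using lim by blast
      then show "limitin X (\<lambda>c. (power_map T N ^^ nk c) z i) (z i) sequentially"
        using i nk(2) by (simp add: power_map_iter Suc_le_eq)
    qed
    then have L: "\<And>U. openin (power_top X N) U \<Longrightarrow> z \<in> U \<Longrightarrow> \<exists>K. \<forall>k\<ge>K. (power_map T N ^^ nk k) z \<in> U"
      unfolding limitin_def eventually_sequentially by blast
    show ?thesis unfolding recurrent_point_def in_closure_of
    proof (intro conjI allI impI zt)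
      fix U assume U: "z \<in> U \<and> openin (power_top X N) U"
      then obtain K where "\<forall>k\<ge>K. (power_map T N ^^ nk k) z \<in> U" using L by blast
      then have "(power_map T N ^^ nk K) z \<in> U" by blast
      moreover have "nk K \<ge> 1" using nk(2) by (simp add: Suc_le_eq)
      ultimately show "\<exists>y. y \<in> {(power_map T N ^^ n) z |n. 1 \<le> n} \<and> y \<in> U" by blast
    qed
  qed
  have "Z \<subseteq> {x \<in> topspace (power_top X N). recurrent_point (power_top X N) (power_map T N) x}"
    using rec Y PiE_mono[of "{..<N}" "\<lambda>_. Y" "\<lambda>_. topspace X"] unfolding topspace_power_top by (simp add: Z_def subset_iff)
  then have "power_top X N closure_of Z \<subseteq> power_top X N closure_of {x \<in> topspace (power_top X N). recurrent_point (power_top X N) (power_map T N) x}"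
    by (rule closure_of_mono)
  then show ?thesis unfolding recurrent_map_def by (metis cZ closure_of_subset_topspace subset_antisym)
qed


lemma phi_cont:
  assumes "continuous_map X X T"
  shows "continuous_map (product_topology (\<lambda>_::nat. X) UNIV) (product_topology (\<lambda>_::nat. X) UNIV)
           (\<lambda>y i. (T ^^ n) (y i))"
  unfolding continuous_map_componentwise_UNIV
proof
  fix k :: nat
  have "continuous_map (product_topology (\<lambda>_::nat. X) UNIV) X ((T ^^ n) \<circ> (\<lambda>y. y k))"
    by (rule continuous_map_compose[OF continuous_map_product_projection[of k UNIV "\<lambda>_. X"] iter_cont[OF assms, of n]]) simp
  then show "continuous_map (product_topology (\<lambda>_::nat. X) UNIV) X (\<lambda>y. (T ^^ n) (y k))"
    by (simp add: comp_def)
qed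

lemma phi_tr:
  assumes ct: "continuous_map X X T"
    and tr: "\<forall>N\<ge>1. topologically_recurrent (power_top X N) (power_map T N)"
    and W: "openin (product_topology (\<lambda>_::nat. X) UNIV) W" "W \<noteq> {}"
  shows "\<exists>n\<ge>1. \<exists>z\<in>W. (\<lambda>i. (T ^^ n) (z i)) \<in> W"
proof -
  obtain y0 where y0: "y0 \<in> W" using W by blast
  then obtain U where U: "finite {i \<in> UNIV. U i \<noteq> topspace X}" "\<forall>i\<in>UNIV. openin X (U i)"
      "y0 \<in> PiE UNIV U" "PiE UNIV U \<subseteq> W"
    using W(1) unfolding openin_product_topology_alt by blast
  obtain N0 where N0: "{i \<in> UNIV. U i \<noteq> topspace X} \<subseteq> {..<N0}" using finite_nat_bounded[OF U(1)] by blast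
  define N where "N = Suc N0"
  have N1: "N \<ge> 1" by (simp add: N_def)
  have Utop: "U i = topspace X" if "i \<ge> N" for i using N0 that by (auto simp: N_def)
  define B where "B = PiE {..<N} U"
  have "restrict y0 {..<N} \<in> B" using U(3) by (simp add: B_def PiE_iff)
  then have Bne: "B \<noteq> {}" by blast
  have Bo: "openin (power_top X N) B"
    unfolding B_def power_top_def openin_PiE_gen using U(2) by simp
  obtain n x where n: "n \<ge> 1" "x \<in> B" "(power_map T N ^^ n) x \<in> B"
    using tr N1 Bo Bne unfolding topologically_recurrent_def by blast
  have xn: "(T ^^ n) (x i) \<in> U i" if "i < N" for i
  proof -
    have "(power_map T N ^^ n) x i \<in> U i" using n(3) that by (auto simp: B_def PiE_iff)
    then show ?thesis using n(1) that by (simp add: power_map_iter)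
  qed
  define z where "z = (\<lambda>i. if i < N then x i else y0 i)"
  have y0U: "y0 i \<in> U i" for i using U(3) by (simp add: PiE_iff)
  have "z i \<in> U i" for i
    using n(2) y0U by (auto simp: z_def B_def PiE_iff)
  then have "z \<in> PiE UNIV U" by (simp add: PiE_iff)
  moreover
  have "(T ^^ n) (z i) \<in> U i" for i
  proof (cases "i < N")
    case True then show ?thesis using xn by (simp add: z_def)
  next
    case False
    then have "U i = topspace X" using Utop by simp
    moreover then have "y0 i \<in> topspace X" using y0U by metis
    ultimately show ?thesis using False iter_top[OF ct] by (simp add: z_def)
  qed
  then have "(\<lambda>i. (T ^^ n) (z i)) \<in> PiE UNIV U" by (simp add: PiE_iff)
  ultimately show ?thesis using U(4) n(1) by blast
qed

lemma phi_large:
  assumes ct: "continuous_map X X T"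
    and tr: "\<forall>N\<ge>1. topologically_recurrent (power_top X N) (power_map T N)"
  shows "openin (product_topology (\<lambda>_::nat. X) UNIV) W \<Longrightarrow> W \<noteq> {} \<Longrightarrow>
          \<exists>n\<ge>1. n \<ge> K \<and> (\<exists>z\<in>W. (\<lambda>i. (T ^^ n) (z i)) \<in> W)"
proof (induction K arbitrary: W)
  case 0
  then show ?case using phi_tr[OF ct tr] by simp
next
  case (Suc K)
  then obtain n x where n: "n \<ge> 1" "n \<ge> K" "x \<in> W" "(\<lambda>i. (T ^^ n) (x i)) \<in> W" by blast
  define W' where "W' = {y \<in> topspace (product_topology (\<lambda>_::nat. X) UNIV). (\<lambda>i. (T ^^ n) (y i)) \<in> W} \<inter> W"
  have "openin (product_topology (\<lambda>_::nat. X) UNIV) W'"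
    unfolding W'_def
    by (intro openin_Int openin_continuous_map_preimage[OF phi_cont[OF ct] Suc.prems(1)] Suc.prems(1))
  moreover have "x \<in> W'" using n Suc.prems(1) openin_subset unfolding W'_def by blast
  ultimately obtain m z where m: "m \<ge> 1" "z \<in> W'" "(\<lambda>i. (T ^^ m) (z i)) \<in> W'"
    using phi_tr[OF ct tr] by blast
  have "(\<lambda>i. (T ^^ n) ((T ^^ m) (z i))) \<in> W" using m(3) unfolding W'_def by blast
  moreover have "(\<lambda>i. (T ^^ n) ((T ^^ m) (z i))) = (\<lambda>i. (T ^^ (n + m)) (z i))"
    by (simp add: funpow_add)
  ultimately have "(\<lambda>i. (T ^^ (n + m)) (z i)) \<in> W" by simp
  moreover have "z \<in> W" using m(2) unfolding W'_def by blast
  ultimately show ?case using n m(1) by (intro exI[of _ "n + m"]) auto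
qed


lemma iii_i:
  assumes cm: "completely_metrizable_space X" and sep: "separable_space X"
    and ct: "continuous_map X X T"
    and tr: "\<forall>N\<ge>1. topologically_recurrent (power_top X N) (power_map T N)"
  shows "quasi_rigid X T"
proof (cases "topspace X = {}")
  case True
  show ?thesis unfolding quasi_rigid_def
    by (rule exI[of _ Suc], rule exI[of _ "{}"]) (simp add: True strict_mono_Suc_iff)
next
  case False
  define P where "P = product_topology (\<lambda>_::nat. X) UNIV"
  define \<Phi> where "\<Phi> = (\<lambda>n (y::nat \<Rightarrow> 'a) i. (T ^^ n) (y i))"
  have cmP: "completely_metrizable_space P"
    unfolding P_def completely_metrizable_space_product_topology using cm by simp
  obtain M d where Md: "Metric_space M d" "Metric_space.mcomplete M d" "P = Metric_space.mtopology M d"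
    using cmP unfolding completely_metrizable_space_def by blast
  interpret PM: Metric_space M d by (rule Md(1))
  obtain MX dX where MXd: "Metric_space MX dX" "X = Metric_space.mtopology MX dX"
    using cm unfolding completely_metrizable_space_def by blast
  interpret XM: Metric_space MX dX by (rule MXd(1))
  obtain C where C: "countable C" "C \<subseteq> topspace X" "X closure_of C = topspace X"
    using sep unfolding separable_space_def by blast
  have contP: "continuous_map P P (\<Phi> n)" for n
    unfolding P_def \<Phi>_def by (rule phi_cont[OF ct])
  have large: "\<exists>n\<ge>1. n \<ge> K \<and> (\<exists>z\<in>W. \<Phi> n z \<in> W)" if "openin P W" "W \<noteq> {}" for K W
    using phi_large[OF ct tr that[unfolded P_def]] unfolding \<Phi>_def by blast
  have Pm: "mtopology_of (metric (M,d)) = P" using Md(3) by simp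
  have tP: "topspace P = M" using Md(3) by simp
  have tX: "topspace X = MX" by (subst MXd(2), rule XM.topspace_mtopology)
  have cd: "continuous_map P euclidean (\<lambda>y. d (\<Phi> n y) y)" for n
  proof -
    have "continuous_map P (mtopology_of (metric (M,d))) (\<Phi> n)"
      "continuous_map P (mtopology_of (metric (M,d))) (\<lambda>y. y)"
      unfolding Pm by (simp_all add: contP)
    from continuous_map_mdist[OF this] show ?thesis by simp
  qed
  define G where "G = (\<lambda>(K::nat, q::nat). {y \<in> topspace P. \<exists>n. n \<ge> K \<and> n \<ge> 1 \<and> d (\<Phi> n y) y < 1 / real (Suc q)})"
  define D where "D = (\<lambda>(c, q::nat). {y \<in> topspace P. \<exists>i. y i \<in> XM.mball c (1 / real (Suc q))})"
  have openG: "openin P (G Kq)" for Kq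
  proof -
    obtain K q where Kq: "Kq = (K, q)" by fastforce
    have "G Kq = (\<Union>n\<in>{n. n \<ge> K \<and> n \<ge> 1}. {y \<in> topspace P. d (\<Phi> n y) y \<in> {..<1 / real (Suc q)}})"
      unfolding G_def Kq by auto
    moreover have "openin P {y \<in> topspace P. d (\<Phi> n y) y \<in> {..<1 / real (Suc q)}}" for n
      using openin_continuous_map_preimage[OF cd[of n], of "{..<1 / real (Suc q)}"] by simp
    ultimately show ?thesis by auto
  qed
  have denseG: "P closure_of (G Kq) = topspace P" for Kq
    unfolding dense_intersects_open
  proof (intro allI impI)
    obtain K q where Kq: "Kq = (K, q)" by fastforce
    fix W assume W: "openin P W \<and> W \<noteq> {}"
    then obtain y0 where y0: "y0 \<in> W" by blast
    have WM: "W \<subseteq> M" "\<forall>x. x \<in> W \<longrightarrow> (\<exists>r>0. PM.mball x r \<subseteq> W)"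
      using W Md(3) PM.openin_mtopology by auto
    then obtain r where r: "r > 0" "PM.mball y0 r \<subseteq> W" using y0 by blast
    define e where "e = 1 / real (Suc q)"
    have e: "e > 0" by (simp add: e_def)
    define B where "B = PM.mball y0 (min r (e/2))"
    have Bo: "openin P B" unfolding B_def Md(3) by simp
    have "y0 \<in> B" using y0 WM r e by (simp add: B_def subset_iff)
    then obtain n z where nz: "n \<ge> 1" "n \<ge> K" "z \<in> B" "\<Phi> n z \<in> B" using large[OF Bo] by blast
    have "d (\<Phi> n z) z \<le> d (\<Phi> n z) y0 + d y0 z"
      using nz(3,4) unfolding B_def by (intro PM.triangle) auto
    also have "\<dots> < e" using nz(3,4) unfolding B_def by (simp add: PM.commute)
    finally have "d (\<Phi> n z) z < e" .
    moreover have "B \<subseteq> W" using r unfolding B_def by (meson PM.mball_subset_concentric min.cobounded1 order_trans)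
    moreover have "z \<in> topspace P" using nz(3) tP unfolding B_def by simp
    ultimately show "G Kq \<inter> W \<noteq> {}" using nz unfolding G_def Kq e_def by auto
  qed
  have openD: "openin P (D cq)" for cq
  proof -
    obtain c q where cq: "cq = (c, q)" by fastforce
    have "D cq = (\<Union>i. {y \<in> topspace P. y i \<in> XM.mball c (1 / real (Suc q))})"
      unfolding D_def cq by auto
    moreover have "openin P {y \<in> topspace P. y i \<in> XM.mball c (1 / real (Suc q))}" for i
    proof -
      have pc: "continuous_map P X (\<lambda>y. y i)" unfolding P_def by (rule continuous_map_product_projection) simp
      have "openin X (XM.mball c (1 / real (Suc q)))" by (subst MXd(2), rule XM.openin_mball)
      then show ?thesis by (rule openin_continuous_map_preimage[OF pc])
    qed
    ultimately show ?thesis by auto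
  qed
  have denseD: "P closure_of (D cq) = topspace P" if "fst cq \<in> C" for cq
    unfolding dense_intersects_open
  proof (intro allI impI)
    obtain c q where cq: "cq = (c, q)" by fastforce
    then have c: "c \<in> MX" using that C(2) tX by auto
    fix W assume W: "openin P W \<and> W \<noteq> {}"
    then obtain y0 where y0: "y0 \<in> W" by blast
    then obtain U where U: "finite {i \<in> UNIV. U i \<noteq> topspace X}" "\<forall>i\<in>UNIV. openin X (U i)"
        "y0 \<in> PiE UNIV U" "PiE UNIV U \<subseteq> W"
      using W unfolding P_def openin_product_topology_alt by blast
    obtain N where N: "{i \<in> UNIV. U i \<noteq> topspace X} \<subseteq> {..<N}" using finite_nat_bounded[OF U(1)] by blast
    then have UN: "U N = topspace X" by auto
    define y' where "y' = y0(N := c)"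
    have "y' \<in> PiE UNIV U" using U(3) UN c tX by (auto simp: y'_def PiE_iff)
    then have "y' \<in> W" using U(4) by blast
    moreover have "y' \<in> topspace P" using W \<open>y' \<in> W\<close> openin_subset by blast
    moreover have "y' N \<in> XM.mball c (1 / real (Suc q))" using c by (simp add: y'_def)
    ultimately show "D cq \<inter> W \<noteq> {}" unfolding D_def cq by auto
  qed
  define \<G> where "\<G> = G ` UNIV \<union> D ` (C \<times> UNIV)"
  have "countable \<G>" unfolding \<G>_def using C(1) by simp
  moreover have "openin P S \<and> P closure_of S = topspace P" if "S \<in> \<G>" for S
    using that openG denseG openD denseD unfolding \<G>_def by auto
  ultimately have dense: "P closure_of \<Inter>\<G> = topspace P"
    using Baire_category[OF disjI1[OF cmP]] by blast
  obtain x0 where x0: "x0 \<in> topspace X" using False by blast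
  have "(\<lambda>_. x0) \<in> topspace P" unfolding P_def using x0 by (simp add: PiE_iff)
  then have "\<Inter>\<G> \<noteq> {}" using dense by auto
  then obtain y where y: "y \<in> \<Inter>\<G>" by blast
  have yG: "y \<in> G (K, q)" for K q using y unfolding \<G>_def by blast
  have yD: "y \<in> D (c, q)" if "c \<in> C" for c q using y that unfolding \<G>_def by blast
  have yP: "y \<in> topspace P" using yG[of 0 0] unfolding G_def by simp
  define Q where "Q = (\<lambda>q K n. n \<ge> K \<and> n \<ge> 1 \<and> d (\<Phi> n y) y < 1 / real (Suc q))"
  have exQ: "\<exists>n. Q q K n" for q K using yG[of K q] unfolding G_def Q_def by auto
  define s where "s = rec_nat (SOME n. Q 0 1 n) (\<lambda>j sj. SOME n. Q (Suc j) (Suc sj) n)"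
  have s0: "Q 0 1 (s 0)" unfolding s_def using someI_ex[OF exQ] by simp
  have sS: "Q (Suc j) (Suc (s j)) (s (Suc j))" for j
    unfolding s_def using someI_ex[OF exQ] by simp
  have sQ: "s j \<ge> 1 \<and> d (\<Phi> (s j) y) y < 1 / real (Suc j)" for j
    using s0 sS unfolding Q_def by (cases j) auto
  have smono: "strict_mono s" unfolding strict_mono_Suc_iff
  proof
    fix n
    have "Suc (s n) \<le> s (Suc n)" using sS[of n] unfolding Q_def by blast
    then show "s n < s (Suc n)" by simp
  qed
  have limP: "limitin P (\<lambda>j. \<Phi> (s j) y) y sequentially"
    unfolding Md(3) PM.limitin_metric
  proof (intro conjI allI impI)
    show "y \<in> M" using yP tP by simp
    fix \<epsilon> :: real assume "\<epsilon> > 0"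
    then obtain n where n: "n > 0" "inverse (real n) < \<epsilon>" using ex_inverse_of_nat_less by blast
    show "\<forall>\<^sub>F j in sequentially. \<Phi> (s j) y \<in> M \<and> d (\<Phi> (s j) y) y < \<epsilon>"
      unfolding eventually_sequentially
    proof (intro exI allI impI)
      fix j assume "n \<le> j"
      then have "1 / real (Suc j) \<le> inverse (real n)" using n(1)
        by (simp add: divide_simps)
      then show "\<Phi> (s j) y \<in> M \<and> d (\<Phi> (s j) y) y < \<epsilon>"
        using sQ[of j] n(2) continuous_map_image_subset_topspace[OF contP[of "s j"]] yP tP by auto
    qed
  qed
  have limX: "limitin X (\<lambda>j. (T ^^ s j) (y i)) (y i) sequentially" for i
    using limP unfolding P_def limitin_componentwise \<Phi>_def by simp
  have Ysub: "range y \<subseteq> topspace X" using yP unfolding P_def by auto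
  have Ydense: "X closure_of range y = topspace X"
  proof (rule subset_antisym[OF closure_of_subset_topspace subsetI])
    fix x assume x: "x \<in> topspace X"
    show "x \<in> X closure_of range y" unfolding in_closure_of
    proof (intro conjI allI impI x)
      fix V assume V: "x \<in> V \<and> openin X V"
      then obtain r where r: "r > 0" "XM.mball x r \<subseteq> V"
        using XM.openin_mtopology MXd(2) by metis
      have xM: "x \<in> MX" using x tX by simp
      have "openin X (XM.mball x (r/2))" by (subst MXd(2), rule XM.openin_mball)
      moreover have "x \<in> XM.mball x (r/2)" using xM r by simp
      moreover have "x \<in> X closure_of C" using C(3) x by simp
      ultimately obtain c where c: "c \<in> C" "c \<in> XM.mball x (r/2)"
        unfolding in_closure_of by blast
      obtain n where n: "n > 0" "inverse (real n) < r/2" using ex_inverse_of_nat_less r(1) by (metis half_gt_zero)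
      obtain i where i: "y i \<in> XM.mball c (1 / real (Suc n))" using yD[OF c(1), of n] unfolding D_def by auto
      have "1 / real (Suc n) \<le> inverse (real n)" using n(1) by (simp add: divide_simps)
      then have "dX c (y i) < r/2" using i n(2) by simp
      moreover have "dX x c < r/2" using c(2) by simp
      moreover have "dX x (y i) \<le> dX x c + dX c (y i)" using c(2) i XM.triangle by simp
      ultimately have "y i \<in> XM.mball x r" using xM i by simp
      then show "\<exists>z. z \<in> range y \<and> z \<in> V" using r(2) by blast
    qed
  qed
  have spos: "\<forall>k. 0 < s k" using sQ by (simp add: Suc_le_eq)
  show ?thesis unfolding quasi_rigid_def
    using smono spos Ysub Ydense limX by (intro exI[of _ s] exI[of _ "range y"]) blast
qed


theorem mainTheorem3:
  fixes X :: "'a topology" and T :: "'a \<Rightarrow> 'a"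
  assumes "completely_metrizable_space X" and "separable_space X"
    and "continuous_map X X T"
  shows "(quasi_rigid X T \<longleftrightarrow> topologically_quasi_rigid X T)
       \<and> (topologically_quasi_rigid X T \<longleftrightarrow>
            (\<forall>N\<ge>1. topologically_recurrent (power_top X N) (power_map T N)))
       \<and> ((\<forall>N\<ge>1. topologically_recurrent (power_top X N) (power_map T N)) \<longleftrightarrow>
            (\<forall>N\<ge>1. recurrent_map (power_top X N) (power_map T N)))"
proof -
  have 1: "quasi_rigid X T \<Longrightarrow> topologically_quasi_rigid X T" by (rule i_ii)
  have 2: "topologically_quasi_rigid X T \<Longrightarrow> (\<forall>N\<ge>1. topologically_recurrent (power_top X N) (power_map T N))"
    using ii_iii by blast
  have 3: "(\<forall>N\<ge>1. topologically_recurrent (power_top X N) (power_map T N)) \<Longrightarrow> quasi_rigid X T"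
    using iii_i assms by blast
  have 4: "quasi_rigid X T \<Longrightarrow> (\<forall>N\<ge>1. recurrent_map (power_top X N) (power_map T N))"
    using i_iv assms(3) by blast
  have 5: "(\<forall>N\<ge>1. recurrent_map (power_top X N) (power_map T N)) \<Longrightarrow> (\<forall>N\<ge>1. topologically_recurrent (power_top X N) (power_map T N))"
    using iv_iii by blast
  show ?thesis using 1 2 3 4 5 by blast
qed

end
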